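(* Let $\mathcal X$ be a Banach space, $N\in\mathbb N$, $a>0$, $\delta>0$, $r_l=e^{-2\pi2^{-l}}$, $f\in\mathcal A(\mathcal X)$, $l\in\mathbb N_0$ and $\zeta_x\in\mathbb T$. If $$\sum_{m=1}^\infty2^{-mN\delta}\,2^{m+l}\int_{\mathbb T}\frac{\|f_{m+l}(\zeta_y)\|^\delta_{\mathcal X}}{(1+2^l|\zeta_x-\zeta_y|)^{a\delta}}\,dy<\infty,$$ then $M_lf(\zeta_x)<\infty$, where $$M_lf(\zeta_x)=\sup_{k\in\mathbb N_0}\sup_{\zeta_y\in\mathbb T}\frac{2^{-kN}\|f_{l+k}(\zeta_y)\|_{\mathcal X}}{(1+2^l|\zeta_x-\zeta_y|)^a}.$$
   Context: $\mathbb D$ unit disc, $\mathbb T$ unit circle, $\zeta_x=e^{2\pi ix}$; $dy$ normalized arc length; $|\zeta_x-\zeta_y|$ arc-length distance (distance from $x-y$ to $\mathbb Z$). $\mathcal A(\mathcal X)$: analytic $f:\mathbb D\to\mathcal X$; $f_l(\zeta)=f(r_l\zeta)$. *)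

theory Defs
  imports "HOL-Analysis.Analysis"
begin

text \<open>Complex Banach spaces: a real Banach space with a compatible complex scalar
multiplication (the library only has real vector spaces).\<close>
class complex_banach = banach +
  fixes scaleC :: "complex \<Rightarrow> 'a \<Rightarrow> 'a"
  assumes scaleC_add_left: "scaleC (c + d) x = scaleC c x + scaleC d x"
    and scaleC_add_right: "scaleC c (x + y) = scaleC c x + scaleC c y"
    and scaleC_scaleC: "scaleC c (scaleC d x) = scaleC (c * d) x"
    and scaleC_one: "scaleC 1 x = x"
    and scaleC_of_real: "scaleC (complex_of_real r) x = scaleR r x"
    and norm_scaleC: "norm (scaleC c x) = cmod c * norm x"

definition analytic_disc :: "(complex \<Rightarrow> 'a::complex_banach) \<Rightarrow> bool" where
  "analytic_disc f \<longleftrightarrow>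
     (\<forall>z\<in>ball 0 1. \<exists>D. ((\<lambda>w. scaleC (inverse (w - z)) (f w - f z)) \<longlongrightarrow> D) (at z))"

definition rad :: "nat \<Rightarrow> real" where
  "rad l = exp (- 2 * pi * inverse (2 ^ l))"

definition zeta :: "real \<Rightarrow> complex" where
  "zeta x = cis (2 * pi * x)"

text \<open>|zeta_x - zeta_y| := distance from x - y to the integers\<close>
definition tdist :: "real \<Rightarrow> real \<Rightarrow> real" where
  "tdist x y = \<bar>(x - y) - real_of_int (round (x - y))\<bar>"

definition dil :: "(complex \<Rightarrow> 'a) \<Rightarrow> nat \<Rightarrow> complex \<Rightarrow> 'a" where
  "dil f l z = f (complex_of_real (rad l) * z)"

end

theory Submission
  imports Defs "HOL-Complex_Analysis.Complex_Analysis"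
begin


lemma zeta_exp: "zeta t = exp (2 * of_real pi * \<i> * of_real t)"
  unfolding zeta_def cis_conv_exp by (simp add: mult_ac)

lemma norm_zeta[simp]: "norm (zeta t) = 1"
  by (simp add: zeta_def)

lemma cauchy_avg:
  fixes h :: "complex \<Rightarrow> complex"
  assumes hol: "h holomorphic_on cball 0 \<rho>" and z: "norm z < \<rho>"
  shows "norm (h z) \<le> \<rho> / (\<rho> - norm z) * integral {0..1} (\<lambda>t. norm (h (of_real \<rho> * zeta t)))"
proof -
  have \<rho>: "\<rho> > 0" using z norm_ge_zero[of z] by linarith
  have ci: "((\<lambda>u. h u/(u-z)) has_contour_integral (2 * of_real pi * \<i> * h z)) (circlepath 0 \<rho>)"
    using Cauchy_integral_circlepath_simple[OF hol] z by simp
  define F where "F = (\<lambda>x. h (of_real \<rho> * zeta x) / (of_real \<rho> * zeta x - z) * (2 * pi * \<i> * \<rho> * zeta x))"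
  have "(F has_integral (2 * of_real pi * \<i> * h z)) {0..1}"
    using ci unfolding has_contour_integral_def
    apply (rule has_integral_spike_eq[where S="{}", THEN iffD1, rotated 2])
    by (auto simp: F_def vector_derivative_circlepath01 simp del: exp_of_real) (auto simp: circlepath zeta_exp)
  hence intF: "F integrable_on {0..1}" and eqF: "integral {0..1} F = 2 * of_real pi * \<i> * h z"
    by (auto simp: integrable_on_def integral_unique)
  have contH: "continuous_on {0..1} (\<lambda>t. norm (h (of_real \<rho> * zeta t)))"
  proof -
    have "continuous_on {0..1} (\<lambda>t. of_real \<rho> * zeta t)"
      unfolding zeta_exp by (intro continuous_intros)
    moreover have "(\<lambda>t. of_real \<rho> * zeta t) ` {0..1} \<subseteq> cball 0 \<rho>"
      using \<rho> by (auto simp: norm_mult)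
    ultimately have "continuous_on {0..1} (\<lambda>t. h (of_real \<rho> * zeta t))"
      using holomorphic_on_imp_continuous_on[OF hol] continuous_on_compose2 by blast
    thus ?thesis by (intro continuous_on_norm)
  qed
  define G where "G = (\<lambda>t. 2 * pi * \<rho> / (\<rho> - norm z) * norm (h (of_real \<rho> * zeta t)))"
  have intG: "G integrable_on {0..1}"
    unfolding G_def by (rule integrable_continuous_real, rule continuous_on_mult[OF continuous_on_const contH])
  have le: "norm (F x) \<le> G x" for x
  proof -
    have d: "\<rho> - norm z \<le> norm (of_real \<rho> * zeta x - z)"
      using norm_triangle_ineq2[of "of_real \<rho> * zeta x" z] \<rho> by (simp add: norm_mult)
    have pos: "\<rho> - norm z > 0" using z by simp
    have "norm (F x) = norm (h (of_real \<rho> * zeta x)) * (2 * pi * \<rho>) / norm (of_real \<rho> * zeta x - z)"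
      using \<rho> by (simp add: F_def norm_mult norm_divide)
    also have "\<dots> \<le> norm (h (of_real \<rho> * zeta x)) * (2 * pi * \<rho>) / (\<rho> - norm z)"
      by (intro divide_left_mono d pos mult_nonneg_nonneg mult_pos_pos) (use \<rho> d pos in auto)
    finally show ?thesis by (simp add: G_def field_simps)
  qed
  have "norm (integral {0..1} F) \<le> integral {0..1} G"
    by (rule integral_norm_bound_integral[OF intF intG le])
  also have "integral {0..1} G = 2 * pi * (\<rho> / (\<rho> - norm z) * integral {0..1} (\<lambda>t. norm (h (of_real \<rho> * zeta t))))"
    unfolding G_def by (simp add: integral_mult_right)
  finally have "2 * pi * norm (h z) \<le> 2 * pi * (\<rho> / (\<rho> - norm z) * integral {0..1} (\<lambda>t. norm (h (of_real \<rho> * zeta t))))"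
    unfolding eqF by (simp add: norm_mult)
  thus ?thesis using pi_gt_zero by (simp only: mult_le_cancel_left_pos[of "2*pi"])
qed

lemma cont_circ:
  fixes g :: "complex \<Rightarrow> complex"
  assumes "continuous_on (cball 0 R) g" "\<delta> > 0" "U \<subseteq> {0..R}"
  shows "continuous_on (U \<times> {0..1}) (\<lambda>(\<rho>, t). norm (g (of_real \<rho> * zeta t)) powr \<delta>)"
proof -
  have c1: "continuous_on (U \<times> {0..1}) (\<lambda>p. of_real (fst p) * zeta (snd p))"
    unfolding zeta_exp by (intro continuous_intros)
  have "(\<lambda>p. of_real (fst p) * zeta (snd p)) ` (U \<times> {0..1}) \<subseteq> cball 0 R"
    using assms(3) by (auto simp: norm_mult)
  hence c2: "continuous_on (U \<times> {0..1}) (\<lambda>p. g (of_real (fst p) * zeta (snd p)))"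
    using continuous_on_compose2[OF assms(1) c1] by blast
  have "continuous_on (U \<times> {0..1}) (\<lambda>p. norm (g (of_real (fst p) * zeta (snd p))) powr \<delta>)"
    by (rule continuous_on_powr') (use assms(2) c2 in \<open>auto intro: continuous_on_norm continuous_on_const\<close>)
  thus ?thesis by (simp add: case_prod_beta)
qed

lemma zerofree_avg:
  fixes g :: "complex \<Rightarrow> complex"
  assumes hol: "g holomorphic_on ball 0 R1" and RR: "R < R1"
    and nz: "\<And>w. w \<in> ball 0 R \<Longrightarrow> g w \<noteq> 0" and z: "norm z < R" and \<delta>: "\<delta> > 0"
  shows "norm (g z) powr \<delta> \<le> R / (R - norm z) * integral {0..1} (\<lambda>t. norm (g (of_real R * zeta t)) powr \<delta>)"
proof -
  have hol0: "g holomorphic_on ball 0 R"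
    using hol RR by (auto intro: holomorphic_on_subset)
  obtain L where L: "L holomorphic_on ball 0 R" "\<And>w. w \<in> ball 0 R \<Longrightarrow> g w = exp (L w)"
    using contractible_imp_holomorphic_log[OF hol0 convex_imp_contractible[OF convex_ball] nz] by blast
  define h where "h = (\<lambda>w. exp (of_real \<delta> * L w))"
  have holh: "h holomorphic_on ball 0 R" unfolding h_def using L(1) by (intro holomorphic_intros)
  have nh: "norm (h w) = norm (g w) powr \<delta>" if "w \<in> ball 0 R" for w
  proof -
    have "norm (g w) = exp (Re (L w))" using L(2)[OF that] by simp
    thus ?thesis by (simp add: h_def powr_def)
  qed
  define c where "c = (norm z + R) / 2"
  have cz: "norm z < c" "c < R" using z by (auto simp: c_def)
  define \<Phi> where "\<Phi> = (\<lambda>\<rho>. \<rho> / (\<rho> - norm z) * integral {0..1} (\<lambda>t. norm (g (of_real \<rho> * zeta t)) powr \<delta>))"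
  have contg: "continuous_on (cball 0 R) g"
    using holomorphic_on_imp_continuous_on[OF hol] RR by (auto intro: continuous_on_subset)
  have "continuous_on {c..R} (\<lambda>\<rho>. integral (cbox 0 1) (\<lambda>t. norm (g (of_real \<rho> * zeta t)) powr \<delta>))"
    apply (rule integral_continuous_on_param)
    using cont_circ[OF contg \<delta>, of "{c..R}"] cz norm_ge_zero[of z] by (auto simp: cbox_interval)
  hence "continuous_on {c..R} \<Phi>"
    unfolding \<Phi>_def cbox_interval using cz
    by (intro continuous_intros) auto
  hence "(\<Phi> \<longlongrightarrow> \<Phi> R) (at R within {c..R})"
    using cz by (auto simp: continuous_on_def)
  hence lim: "(\<Phi> \<longlongrightarrow> \<Phi> R) (at_left R)"
    using cz by (simp add: at_within_Icc_at_left)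
  have ev: "eventually (\<lambda>\<rho>. norm (g z) powr \<delta> \<le> \<Phi> \<rho>) (at_left R)"
    using eventually_at_left_real[OF cz(2)]
  proof (rule eventually_mono)
    fix \<rho> assume \<rho>: "\<rho> \<in> {c<..<R}"
    have sub: "cball 0 \<rho> \<subseteq> ball 0 R" using \<rho> by auto
    have zr: "norm z < \<rho>" using \<rho> cz by auto
    have "norm (g z) powr \<delta> = norm (h z)" using nh z by simp
    also have "\<dots> \<le> \<rho> / (\<rho> - norm z) * integral {0..1} (\<lambda>t. norm (h (of_real \<rho> * zeta t)))"
      by (rule cauchy_avg[OF holomorphic_on_subset[OF holh sub] zr])
    also have "integral {0..1} (\<lambda>t. norm (h (of_real \<rho> * zeta t))) = integral {0..1} (\<lambda>t. norm (g (of_real \<rho> * zeta t)) powr \<delta>)"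
    proof (intro integral_cong nh)
      fix t :: real
      have "\<rho> > 0" using \<rho> cz norm_ge_zero[of z] by (simp only: greaterThanLessThan_iff) linarith
      then show "of_real \<rho> * zeta t \<in> ball 0 R" using \<rho> by (simp add: norm_mult)
    qed
    finally show "norm (g z) powr \<delta> \<le> \<Phi> \<rho>" unfolding \<Phi>_def .
  qed
  have "norm (g z) powr \<delta> \<le> \<Phi> R"
    by (rule tendsto_lowerbound[OF lim ev]) simp
  thus ?thesis unfolding \<Phi>_def .
qed

lemma blaschke_le:
  fixes a w :: complex
  assumes "norm w \<le> R" "norm a \<le> R" "R \<ge> 0"
  shows "R * norm (w - a) \<le> norm (of_real (R^2) - cnj a * w)"
proof -
  have id: "(norm (of_real (R^2) - cnj a * w))^2 - (R * norm (w - a))^2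
        = (R^2 - (norm a)^2) * (R^2 - (norm w)^2)"
    unfolding power_mult_distrib cmod_power2 by (simp add: power2_eq_square algebra_simps)
  have "(norm a)^2 \<le> R^2" "(norm w)^2 \<le> R^2"
    using assms by (auto intro: power_mono)
  hence "(R * norm (w - a))^2 \<le> (norm (of_real (R^2) - cnj a * w))^2"
    using id by (smt (verit) mult_nonneg_nonneg)
  thus ?thesis by (rule power2_le_imp_le) simp
qed

lemma blaschke_eq:
  fixes a w :: complex
  assumes "norm w = R"
  shows "norm (of_real (R^2) - cnj a * w) = R * norm (w - a)"
proof -
  have "of_real (R^2) = w * cnj w" using complex_norm_square[of w] assms by simp
  hence "of_real (R^2) - cnj a * w = w * cnj (w - a)" by (simp add: algebra_simps)
  also have "norm \<dots> = R * norm (w - a)" using assms by (simp only: norm_mult complex_mod_cnj)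
  finally show ?thesis .
qed

lemma zeros_ind:
  fixes g :: "complex \<Rightarrow> complex"
  assumes RR: "R < R1" "0 < R" and \<delta>: "\<delta> > 0"
  shows "g holomorphic_on ball 0 R1 \<Longrightarrow> finite {w\<in>ball 0 R. g w = 0} \<Longrightarrow>
    card {w\<in>ball 0 R. g w = 0} = n \<Longrightarrow> (\<exists>w\<in>ball 0 R1. g w \<noteq> 0) \<Longrightarrow> norm z < R \<Longrightarrow>
    norm (g z) powr \<delta> \<le> R / (R - norm z) * integral {0..1} (\<lambda>t. norm (g (of_real R * zeta t)) powr \<delta>)"
proof (induction n arbitrary: g z)
  case 0
  then have "\<And>w. w\<in>ball 0 R \<Longrightarrow> g w \<noteq> 0" by auto
  then show ?case using zerofree_avg[OF "0.prems"(1) RR(1) _ "0.prems"(5) \<delta>] by blast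
next
  case (Suc n)
  define Z where "Z = {w\<in>ball 0 R. g w = 0}"
  have "Z \<noteq> {}" using Suc.prems(3) unfolding Z_def by (metis card.empty nat.distinct(1))
  then obtain a where aZ: "a \<in> Z" by blast
  hence a: "norm a < R" "g a = 0" by (auto simp: Z_def)
  have aS: "a \<in> ball 0 R1" using a RR by auto
  have nonconst: "\<not> g constant_on ball 0 R1"
  proof
    assume "g constant_on ball 0 R1"
    then obtain k where "\<And>x. x \<in> ball 0 R1 \<Longrightarrow> g x = k" by (auto simp: constant_on_def)
    then show False using Suc.prems(4) aS a by metis
  qed
  obtain h r m where hrm: "0 < m" "0 < r" "ball a r \<subseteq> ball 0 R1" "h holomorphic_on ball a r"
      "\<And>w. w \<in> ball a r \<Longrightarrow> g w = (w - a)^m * h w" "\<And>w. w \<in> ball a r \<Longrightarrow> h w \<noteq> 0"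
    using holomorphic_factor_zero_nonconstant[OF Suc.prems(1) open_ball connected_ball aS a(2) nonconst] by metis
  define c where "c = (\<lambda>w. (of_real (R^2) - cnj a * w) / of_real R)"
  define g1 where "g1 = (\<lambda>w. if w = a then h a * c a ^ m else g w * c w ^ m / (w - a) ^ m)"
  have cnz: "c w \<noteq> 0" if "norm w \<le> R" for w
  proof -
    have "norm a * norm w < R * R"
      using a(1) that RR(2) by (metis mult_strict_right_mono mult_right_mono norm_ge_zero order_le_less_trans mult_less_cancel_left_pos le_less_trans mult_left_mono)
    hence "0 < norm (of_real (R^2)::complex) - norm (cnj a * w)"
      using RR(2) by (simp add: norm_mult power2_eq_square)
    also have "\<dots> \<le> norm (of_real (R^2) - cnj a * w)" by (rule norm_triangle_ineq2)
    finally show ?thesis using RR(2) by (auto simp: c_def)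
  qed
  have eq1: "g1 w = h w * c w ^ m" if "w \<in> ball a r" for w
  proof (cases "w = a")
    case False
    thus ?thesis using hrm(5)[OF that] by (simp add: g1_def)
  qed (simp add: g1_def)
  have hol1: "g1 holomorphic_on ball 0 R1"
  proof -
    have "g1 holomorphic_on ball a r"
      by (rule holomorphic_transform[where f="\<lambda>w. h w * c w ^ m"]) (use hrm(4) eq1 in \<open>auto simp: c_def intro!: holomorphic_intros\<close>)
    moreover have "g1 holomorphic_on (ball 0 R1 - {a})"
      by (rule holomorphic_transform[where f="\<lambda>w. g w * c w ^ m / (w - a) ^ m"])
         (use Suc.prems(1) in \<open>auto simp: g1_def c_def intro!: holomorphic_intros elim: holomorphic_on_subset\<close>)
    ultimately have "g1 holomorphic_on (ball a r \<union> (ball 0 R1 - {a}))"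
      by (intro holomorphic_on_Un) auto
    moreover have "ball a r \<union> (ball 0 R1 - {a}) = ball 0 R1" using hrm(2,3) by auto
    ultimately show ?thesis by simp
  qed
  have g1a: "g1 a \<noteq> 0" using hrm(2,6) cnz[of a] a(1) by (simp add: g1_def)
  have Z1: "{w\<in>ball 0 R. g1 w = 0} = Z - {a}"
  proof -
    have "g1 w = 0 \<longleftrightarrow> g w = 0" if "w \<in> ball 0 R" "w \<noteq> a" for w
      using cnz[of w] that by (auto simp: g1_def)
    thus ?thesis using g1a by (auto simp: Z_def)
  qed
  have IH: "norm (g1 z) powr \<delta> \<le> R / (R - norm z) * integral {0..1} (\<lambda>t. norm (g1 (of_real R * zeta t)) powr \<delta>)"
  proof (rule Suc.IH[OF hol1])
    show "finite {w \<in> ball 0 R. g1 w = 0}" using Suc.prems(2) unfolding Z1 Z_def by simp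
    show "card {w \<in> ball 0 R. g1 w = 0} = n" using Suc.prems(2,3) aZ unfolding Z1 Z_def by simp
    show "\<exists>w\<in>ball 0 R1. g1 w \<noteq> 0" using g1a aS by blast
  qed (use Suc.prems(5) in auto)
  have bd: "norm (g1 w) = norm (g w)" if "norm w = R" for w
  proof -
    have wa: "w \<noteq> a" using that a(1) by auto
    have "norm (c w) = norm (w - a)"
      using blaschke_eq[OF that, of a] RR(2) by (simp add: c_def norm_divide)
    thus ?thesis using wa by (simp add: g1_def norm_divide norm_mult norm_power)
  qed
  have "integral {0..1} (\<lambda>t. norm (g1 (of_real R * zeta t)) powr \<delta>) =
        integral {0..1} (\<lambda>t. norm (g (of_real R * zeta t)) powr \<delta>)"
    using RR(2) by (intro integral_cong) (simp add: bd norm_mult)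
  moreover have "norm (g z) \<le> norm (g1 z)"
  proof (cases "z = a")
    case True thus ?thesis using a by simp
  next
    case False
    have "R * norm (z - a) \<le> norm (of_real (R^2) - cnj a * z)"
      using blaschke_le[of z R a] Suc.prems(5) a(1) RR(2) by simp
    hence le1: "norm (z - a) \<le> norm (c z)" using RR(2) by (simp add: c_def norm_divide field_simps)
    have "norm (g1 z) = norm (g z) * (norm (c z) / norm (z - a)) ^ m"
      using False by (simp add: g1_def norm_divide norm_mult norm_power power_divide)
    moreover have "1 \<le> (norm (c z) / norm (z - a)) ^ m"
      using le1 False by (intro one_le_power) simp
    ultimately show ?thesis by (metis mult_le_cancel_left1 norm_ge_zero mult.commute mult_right_mono mult_1_right)
  qed
  ultimately show ?case using IH
    by (metis (no_types, lifting) norm_ge_zero powr_mono2 \<delta> less_imp_le order_trans)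
qed

lemma scalar_avg:
  fixes g :: "complex \<Rightarrow> complex"
  assumes hol: "g holomorphic_on ball 0 1" and R: "0 < R" "R < 1" and z: "norm z < R" and \<delta>: "\<delta> > 0"
  shows "norm (g z) powr \<delta> \<le> R / (R - norm z) * integral {0..1} (\<lambda>t. norm (g (of_real R * zeta t)) powr \<delta>)"
proof (cases "\<exists>w\<in>ball 0 1. g w \<noteq> 0")
  case False
  hence "g z = 0" "\<And>t. g (of_real R * zeta t) = 0" using z R by (auto simp: norm_mult)
  thus ?thesis by simp
next
  case True
  define Z where "Z = {w\<in>ball 0 R. g w = 0}"
  have "finite Z"
  proof (rule ccontr)
    assume inf: "infinite Z"
    have "Z \<subseteq> cball 0 R" by (auto simp: Z_def)
    then obtain x where x: "x \<in> cball 0 R" "x islimpt Z"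
      using compact_eq_Bolzano_Weierstrass[of "cball (0::complex) R"] inf by auto
    have "g w = 0" if "w \<in> ball 0 1" for w
      by (rule analytic_continuation[OF hol open_ball connected_ball _ _ x(2)])
         (use x(1) R that in \<open>auto simp: Z_def\<close>)
    thus False using True by blast
  qed
  thus ?thesis
    using zeros_ind[OF R(2) R(1) \<delta> hol _ refl True z] unfolding Z_def by blast
qed



lemma chain_union_subspace:
  fixes C :: "'a::real_vector set set"
  assumes ch: "\<And>X Y. X \<in> C \<Longrightarrow> Y \<in> C \<Longrightarrow> X \<subseteq> Y \<or> Y \<subseteq> X"
    and sub: "\<And>X. X \<in> C \<Longrightarrow> subspace X" and ne: "C \<noteq> {}"
  shows "subspace (\<Union>C)"
  unfolding subspace_def
proof (intro conjI ballI allI)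
  obtain X where "X \<in> C" using ne by blast
  thus "0 \<in> \<Union>C" using sub[of X] by (auto simp: subspace_def)
next
  fix x y assume "x \<in> \<Union>C" "y \<in> \<Union>C"
  then obtain X Y where XY: "X \<in> C" "Y \<in> C" "x \<in> X" "y \<in> Y" by blast
  show "x + y \<in> \<Union>C"
  proof (cases "X \<subseteq> Y")
    case True
    hence "x + y \<in> Y" using sub[OF XY(2)] XY by (auto simp: subspace_def)
    thus ?thesis using XY by blast
  next
    case False
    hence "Y \<subseteq> X" using ch[OF XY(1,2)] by blast
    hence "x + y \<in> X" using sub[OF XY(1)] XY by (auto simp: subspace_def)
    thus ?thesis using XY by blast
  qed
next
  fix c :: real and x assume "x \<in> \<Union>C"
  then obtain X where "X \<in> C" "x \<in> X" by blast
  thus "c *\<^sub>R x \<in> \<Union>C" using sub unfolding subspace_def by blast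
qed

lemma real_HB:
  fixes v :: "'a::real_normed_vector"
  shows "\<exists>\<psi>::'a \<Rightarrow> real. linear \<psi> \<and> (\<forall>x. \<psi> x \<le> norm x) \<and> \<psi> v = norm v"
proof -
  define A where "A = {G :: ('a \<times> real) set. subspace G \<and> (v, norm v) \<in> G \<and> (\<forall>p\<in>G. snd p \<le> norm (fst p))}"
  have "\<exists>M\<in>A. \<forall>X\<in>A. M \<subseteq> X \<longrightarrow> X = M"
  proof (rule Zorn_Lemma2, intro ballI)
    fix C assume C: "C \<in> chains A"
    show "\<exists>U\<in>A. \<forall>X\<in>C. X \<subseteq> U"
    proof (cases "C = {}")
      case True
      have "\<forall>p\<in>span {(v, norm v)}. snd p \<le> norm (fst p)"
        unfolding span_singleton by (auto intro: mult_right_mono abs_ge_self[THEN order_trans])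
      hence "span {(v, norm v)} \<in> A"
        unfolding A_def by (auto simp: span_base)
      thus ?thesis using True by blast
    next
      case False
      have "\<Union>C \<in> A" unfolding A_def
        using chain_union_subspace[of C] chainsD[OF C] chainsD2[OF C] False
        by (auto simp: A_def)
      thus ?thesis by blast
    qed
  qed
  then obtain M where MA: "M \<in> A" and max: "\<And>X. X \<in> A \<Longrightarrow> M \<subseteq> X \<Longrightarrow> X = M" by blast
  have subM: "subspace M" and vM: "(v, norm v) \<in> M" and dom: "\<And>x t. (x, t) \<in> M \<Longrightarrow> t \<le> norm x"
    using MA by (auto simp: A_def)
  have add: "(x + y, s + t) \<in> M" if "(x, s) \<in> M" "(y, t) \<in> M" for x y s t
    using subspace_add[OF subM that] by simp
  have scl: "(c *\<^sub>R x, c * t) \<in> M" if "(x, t) \<in> M" for c x t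
    using subspace_scale[OF subM that, of c] by simp
  have zero: "(0, 0) \<in> M" using subspace_0[OF subM] by (simp add: zero_prod_def)
  have uniq: "s = t" if "(x, s) \<in> M" "(x, t) \<in> M" for x s t
  proof -
    have "(x + (-1) *\<^sub>R x, s + (-1) * t) \<in> M" "(x + (-1) *\<^sub>R x, t + (-1) * s) \<in> M"
      by (rule add[OF that(1) scl[OF that(2)]], rule add[OF that(2) scl[OF that(1)]])
    hence "(0, s - t) \<in> M" "(0, t - s) \<in> M" by simp_all
    hence "s - t \<le> 0" "t - s \<le> 0" using dom[of 0 "s-t"] dom[of 0 "t-s"] by simp_all
    thus ?thesis by simp
  qed
  have total: "\<exists>t. (x, t) \<in> M" for x
  proof (rule ccontr)
    assume nx: "\<nexists>t. (x, t) \<in> M"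
    define S where "S = {t - norm (y - x) | y t. (y, t) \<in> M}"
    have key: "t1 - norm (y1 - x) \<le> norm (y2 + x) - t2" if "(y1, t1) \<in> M" "(y2, t2) \<in> M" for y1 t1 y2 t2
    proof -
      have "t1 + t2 \<le> norm (y1 + y2)" using dom[OF add[OF that]] .
      also have "\<dots> = norm ((y1 - x) + (y2 + x))" by (simp add: algebra_simps)
      also have "\<dots> \<le> norm (y1 - x) + norm (y2 + x)" by (rule norm_triangle_ineq)
      finally show ?thesis by simp
    qed
    have Sne: "S \<noteq> {}" using zero by (auto simp: S_def)
    have Sbd: "bdd_above S" unfolding bdd_above_def S_def using key zero by fastforce
    define c where "c = Sup S"
    have c_ge: "t - norm (y - x) \<le> c" if "(y, t) \<in> M" for y t
      unfolding c_def by (rule cSup_upper[OF _ Sbd]) (use that in \<open>auto simp: S_def\<close>)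
    have c_le: "c \<le> norm (y + x) - t" if "(y, t) \<in> M" for y t
      unfolding c_def by (rule cSup_least[OF Sne]) (use that key in \<open>auto simp: S_def\<close>)
    define M' where "M' = span (insert (x, c) M)"
    have spanM: "span M = M" using subM by (rule span_eq_iff[THEN iffD2])
    have M'A: "M' \<in> A" unfolding A_def
    proof (intro CollectI conjI ballI)
      show "subspace M'" unfolding M'_def by simp
      show "(v, norm v) \<in> M'" unfolding M'_def using vM by (simp add: span_base)
    next
      fix p assume "p \<in> M'"
      then obtain k where q: "p - k *\<^sub>R (x, c) \<in> M" unfolding M'_def span_insert spanM by blast
      define y where "y = fst (p - k *\<^sub>R (x, c))"
      define t where "t = snd (p - k *\<^sub>R (x, c))"
      have yt: "(y, t) \<in> M" using q unfolding y_def t_def prod.collapse .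
      have p: "p = (y + k *\<^sub>R x, t + k * c)"
        by (simp add: y_def t_def prod_eq_iff)
      show "snd p \<le> norm (fst p)"
      proof (cases k "0::real" rule: linorder_cases)
        case equal thus ?thesis using p dom[OF yt] by simp
      next
        case greater
        have "c \<le> norm ((1/k) *\<^sub>R y + x) - (1/k) * t" using c_le[OF scl[OF yt, of "1/k"]] .
        hence "k * c \<le> k * (norm ((1/k) *\<^sub>R y + x) - (1/k) * t)" using greater by (intro mult_left_mono) auto
        also have "\<dots> = norm (y + k *\<^sub>R x) - t"
        proof -
          have "k * norm ((1/k) *\<^sub>R y + x) = norm (k *\<^sub>R ((1/k) *\<^sub>R y + x))" using greater by simp
          also have "k *\<^sub>R ((1/k) *\<^sub>R y + x) = y + k *\<^sub>R x" using greater by (simp add: scaleR_add_right)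
          finally show ?thesis using greater by (simp add: right_diff_distrib)
        qed
        finally show ?thesis using p by simp
      next
        case less
        define s where "s = - k"
        have s: "s > 0" using less by (simp add: s_def)
        have "(1/s) * t - norm ((1/s) *\<^sub>R y - x) \<le> c" using c_ge[OF scl[OF yt, of "1/s"]] .
        hence "s * ((1/s) * t - norm ((1/s) *\<^sub>R y - x)) \<le> s * c" using s by (intro mult_left_mono) auto
        also have "s * ((1/s) * t - norm ((1/s) *\<^sub>R y - x)) = t - norm (y - s *\<^sub>R x)"
        proof -
          have "s * norm ((1/s) *\<^sub>R y - x) = norm (s *\<^sub>R ((1/s) *\<^sub>R y - x))" using s by simp
          also have "s *\<^sub>R ((1/s) *\<^sub>R y - x) = y - s *\<^sub>R x" using s by (simp add: scaleR_diff_right)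
          finally show ?thesis using s by (simp add: right_diff_distrib)
        qed
        finally show ?thesis using p by (simp add: s_def)
      qed
    qed
    have "M \<subseteq> M'" unfolding M'_def by (meson span_superset subset_insertI subset_trans)
    hence "M' = M" using max[OF M'A] by blast
    moreover have "(x, c) \<in> M'" unfolding M'_def by (simp add: span_base)
    ultimately show False using nx by blast
  qed
  define \<psi> where "\<psi> x = (SOME t. (x, t) \<in> M)" for x
  have \<psi>M: "(x, \<psi> x) \<in> M" for x unfolding \<psi>_def using total[of x] by (rule someI_ex)
  have \<psi>eq: "\<psi> x = t" if "(x, t) \<in> M" for x t using uniq[OF \<psi>M that] .
  have "linear \<psi>"
    by (rule linearI) (auto intro!: \<psi>eq add scl \<psi>M)
  moreover have "\<forall>x. \<psi> x \<le> norm x" using dom \<psi>M by blast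
  moreover have "\<psi> v = norm v" using \<psi>eq[OF vM] .
  ultimately show ?thesis by blast
qed

lemma scaleC_ii: "scaleC \<i> (scaleC \<i> x) = - (x::'a::complex_banach)"
proof -
  have "scaleC \<i> (scaleC \<i> x) = scaleC (complex_of_real (-1)) x" by (simp add: scaleC_scaleC)
  also have "\<dots> = - x" by (simp only: scaleC_of_real) simp
  finally show ?thesis .
qed

lemma scaleC_decomp: "scaleC c (x::'a::complex_banach) = Re c *\<^sub>R x + Im c *\<^sub>R scaleC \<i> x"
proof -
  have "c = complex_of_real (Re c) + complex_of_real (Im c) * \<i>" by (simp add: complex_eq_iff)
  hence "scaleC c x = scaleC (complex_of_real (Re c)) x + scaleC (complex_of_real (Im c)) (scaleC \<i> x)"
    by (metis scaleC_add_left scaleC_scaleC)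
  thus ?thesis by (simp add: scaleC_of_real)
qed

lemma complex_HB:
  fixes v :: "'a::complex_banach"
  shows "\<exists>\<phi>::'a \<Rightarrow> complex. (\<forall>x y. \<phi> (x + y) = \<phi> x + \<phi> y) \<and> (\<forall>c x. \<phi> (scaleC c x) = c * \<phi> x)
           \<and> (\<forall>x. norm (\<phi> x) \<le> norm x) \<and> \<phi> v = of_real (norm v)"
proof -
  obtain \<psi> :: "'a \<Rightarrow> real" where lin: "linear \<psi>" and dom: "\<And>x. \<psi> x \<le> norm x" and pv: "\<psi> v = norm v"
    using real_HB[of v] by blast
  define \<phi> where "\<phi> x = complex_of_real (\<psi> x) - \<i> * complex_of_real (\<psi> (scaleC \<i> x))" for x
  have add: "\<phi> (x + y) = \<phi> x + \<phi> y" for x y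
    unfolding \<phi>_def by (simp add: scaleC_add_right linear_add[OF lin] algebra_simps)
  have scR: "\<phi> (r *\<^sub>R x) = complex_of_real r * \<phi> x" for r x
  proof -
    have "scaleC \<i> (r *\<^sub>R x) = r *\<^sub>R scaleC \<i> x"
      by (metis scaleC_of_real scaleC_scaleC mult.commute)
    thus ?thesis unfolding \<phi>_def by (simp add: linear_scale[OF lin] algebra_simps)
  qed
  have neg: "\<psi> (- x) = - \<psi> x" for x using linear_neg[OF lin] .
  have sci: "\<phi> (scaleC \<i> x) = \<i> * \<phi> x" for x
    unfolding \<phi>_def by (simp add: scaleC_ii neg algebra_simps)
  have scC: "\<phi> (scaleC c x) = c * \<phi> x" for c x
  proof -
    have "\<phi> (scaleC c x) = complex_of_real (Re c) * \<phi> x + complex_of_real (Im c) * (\<i> * \<phi> x)"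
      unfolding scaleC_decomp[of c x] add scR sci ..
    also have "\<dots> = (complex_of_real (Re c) + complex_of_real (Im c) * \<i>) * \<phi> x" by (simp add: algebra_simps)
    also have "complex_of_real (Re c) + complex_of_real (Im c) * \<i> = c" by (simp add: complex_eq_iff)
    finally show ?thesis .
  qed
  have Re\<phi>: "Re (\<phi> x) = \<psi> x" for x by (simp add: \<phi>_def)
  have nrm: "norm (\<phi> x) \<le> norm x" for x
  proof (cases "\<phi> x = 0")
    case False
    define w where "w = cnj (\<phi> x) / complex_of_real (norm (\<phi> x))"
    have "\<phi> (scaleC w x) = w * \<phi> x" by (rule scC)
    also have "w * \<phi> x = complex_of_real (norm (\<phi> x))"
    proof -
      have "cnj (\<phi> x) * \<phi> x = complex_of_real (norm (\<phi> x)) * complex_of_real (norm (\<phi> x))"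
        using complex_norm_square[of "\<phi> x"] by (simp add: power2_eq_square mult.commute)
      thus ?thesis using False by (simp add: w_def)
    qed
    finally have "norm (\<phi> x) = \<psi> (scaleC w x)" using Re\<phi>[of "scaleC w x"] by simp
    also have "\<dots> \<le> norm (scaleC w x)" by (rule dom)
    also have "\<dots> = norm x" using False by (simp add: norm_scaleC w_def norm_divide)
    finally show ?thesis .
  qed simp
  have "\<phi> v = of_real (norm v)"
  proof -
    have "(Re (\<phi> v))^2 + (Im (\<phi> v))^2 \<le> (norm v)^2"
      using nrm[of v] by (simp add: cmod_power2[symmetric] power_mono)
    hence "Im (\<phi> v) = 0" using Re\<phi>[of v] pv by simp
    thus ?thesis using Re\<phi>[of v] pv by (simp add: complex_eq_iff)
  qed
  thus ?thesis using add scC nrm by blast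
qed



lemma analytic_disc_cont:
  fixes f :: "complex \<Rightarrow> 'a::complex_banach"
  assumes an: "analytic_disc f" and z: "z \<in> ball 0 1"
  shows "isCont f z"
proof -
  obtain D where D: "((\<lambda>w. scaleC (inverse (w - z)) (f w - f z)) \<longlongrightarrow> D) (at z)"
    using an z unfolding analytic_disc_def by blast
  have "((\<lambda>w. norm (w - z) * norm (scaleC (inverse (w - z)) (f w - f z))) \<longlongrightarrow> 0 * norm D) (at z)"
    by (intro tendsto_intros D) (auto intro!: tendsto_eq_intros)
  moreover have "eventually (\<lambda>w. norm (w - z) * norm (scaleC (inverse (w - z)) (f w - f z)) = norm (f w - f z)) (at z)"
  proof (rule eventually_mono[OF eventually_neq_at_within[of z z UNIV]])
    fix w assume "w \<noteq> z"
    hence "scaleC (w - z) (scaleC (inverse (w - z)) (f w - f z)) = f w - f z"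
      by (simp add: scaleC_scaleC scaleC_one)
    thus "norm (w - z) * norm (scaleC (inverse (w - z)) (f w - f z)) = norm (f w - f z)"
      by (metis norm_scaleC)
  qed
  ultimately have "((\<lambda>w. norm (f w - f z)) \<longlongrightarrow> 0) (at z)"
    using tendsto_cong by fastforce
  hence "(f \<longlongrightarrow> f z) (at z)"
    by (simp add: tendsto_norm_zero_iff LIM_zero_cancel)
  thus ?thesis by (simp add: isCont_def)
qed

lemma functional_hol:
  fixes f :: "complex \<Rightarrow> 'a::complex_banach" and \<phi> :: "'a \<Rightarrow> complex"
  assumes an: "analytic_disc f"
    and add: "\<And>x y. \<phi> (x + y) = \<phi> x + \<phi> y" and scC: "\<And>c x. \<phi> (scaleC c x) = c * \<phi> x"
    and nrm: "\<And>x. norm (\<phi> x) \<le> norm x"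
  shows "(\<lambda>w. \<phi> (f w)) holomorphic_on ball 0 1"
proof -
  have bl: "bounded_linear \<phi>"
  proof
    show "\<phi> (x + y) = \<phi> x + \<phi> y" for x y by (rule add)
    show "\<phi> (r *\<^sub>R x) = r *\<^sub>R \<phi> x" for r x
      using scC[of "complex_of_real r" x] by (simp add: scaleC_of_real scaleR_conv_of_real)
    show "\<exists>K. \<forall>x. norm (\<phi> x) \<le> norm x * K" using nrm by (intro exI[of _ 1]) simp
  qed
  have sub: "\<phi> (x - y) = \<phi> x - \<phi> y" for x y using linear_diff[OF bounded_linear.linear[OF bl]] .
  show ?thesis unfolding holomorphic_on_open[OF open_ball]
  proof
    fix z :: complex assume z: "z \<in> ball 0 1"
    obtain D where D: "((\<lambda>w. scaleC (inverse (w - z)) (f w - f z)) \<longlongrightarrow> D) (at z)"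
      using an z unfolding analytic_disc_def by blast
    have "((\<lambda>w. \<phi> (scaleC (inverse (w - z)) (f w - f z))) \<longlongrightarrow> \<phi> D) (at z)"
      by (rule bounded_linear.tendsto[OF bl D])
    moreover have "eventually (\<lambda>w. \<phi> (scaleC (inverse (w - z)) (f w - f z)) = (\<phi> (f w) - \<phi> (f z)) / (w - z)) (at z)"
      by (rule eventually_mono[OF eventually_neq_at_within[of z z UNIV]]) (simp add: scC sub divide_inverse mult.commute)
    ultimately have "((\<lambda>w. (\<phi> (f w) - \<phi> (f z)) / (w - z)) \<longlongrightarrow> \<phi> D) (at z)"
      using tendsto_cong by fastforce
    thus "\<exists>f'. ((\<lambda>w. \<phi> (f w)) has_field_derivative f') (at z)"
      by (auto simp: has_field_derivative_iff)
  qed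
qed

lemma vec_avg:
  fixes f :: "complex \<Rightarrow> 'a::complex_banach"
  assumes an: "analytic_disc f" and R: "0 < R" "R < 1" and z: "norm z < R" and \<delta>: "\<delta> > 0"
  shows "norm (f z) powr \<delta> \<le> R / (R - norm z) * integral {0..1} (\<lambda>t. norm (f (of_real R * zeta t)) powr \<delta>)"
proof -
  obtain \<phi> :: "'a \<Rightarrow> complex" where add: "\<And>x y. \<phi> (x + y) = \<phi> x + \<phi> y"
    and scC: "\<And>c x. \<phi> (scaleC c x) = c * \<phi> x" and nrm: "\<And>x. norm (\<phi> x) \<le> norm x"
    and pv: "\<phi> (f z) = of_real (norm (f z))"
    using complex_HB[of "f z"] by blast
  have hol: "(\<lambda>w. \<phi> (f w)) holomorphic_on ball 0 1" by (rule functional_hol[OF an add scC nrm])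
  have "norm (f z) powr \<delta> = norm (\<phi> (f z)) powr \<delta>" using pv by simp
  also have "\<dots> \<le> R / (R - norm z) * integral {0..1} (\<lambda>t. norm (\<phi> (f (of_real R * zeta t))) powr \<delta>)"
    by (rule scalar_avg[OF hol R z \<delta>])
  also have "\<dots> \<le> R / (R - norm z) * integral {0..1} (\<lambda>t. norm (f (of_real R * zeta t)) powr \<delta>)"
  proof (rule mult_left_mono)
    have cpath: "continuous_on {0..1} (\<lambda>t. of_real R * zeta t)"
      unfolding zeta_exp by (intro continuous_intros)
    have img: "(\<lambda>t. of_real R * zeta t) ` {0..1} \<subseteq> ball 0 1" using R by (auto simp: norm_mult)
    have cf: "continuous_on (ball 0 1) f"
      using analytic_disc_cont[OF an] by (simp add: continuous_at_imp_continuous_on)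
    have cf2: "continuous_on {0..1} (\<lambda>t. f (of_real R * zeta t))"
      using continuous_on_compose2[OF cf cpath img] .
    have cg2: "continuous_on {0..1} (\<lambda>t. \<phi> (f (of_real R * zeta t)))"
      using continuous_on_compose2[OF holomorphic_on_imp_continuous_on[OF hol] cpath img] .
    have i1: "(\<lambda>t. norm (\<phi> (f (of_real R * zeta t))) powr \<delta>) integrable_on {0..1}"
      by (rule integrable_continuous_real, rule continuous_on_powr')
         (use cg2 \<delta> in \<open>auto intro: continuous_on_norm continuous_on_const\<close>)
    have i2: "(\<lambda>t. norm (f (of_real R * zeta t)) powr \<delta>) integrable_on {0..1}"
      by (rule integrable_continuous_real, rule continuous_on_powr')
         (use cf2 \<delta> in \<open>auto intro: continuous_on_norm continuous_on_const\<close>)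
    show "integral {0..1} (\<lambda>t. norm (\<phi> (f (of_real R * zeta t))) powr \<delta>) \<le> integral {0..1} (\<lambda>t. norm (f (of_real R * zeta t)) powr \<delta>)"
      by (rule integral_le[OF i1 i2]) (use \<delta> nrm in \<open>auto intro: powr_mono2\<close>)
    show "0 \<le> R / (R - norm z)" using z R by simp
  qed
  finally show ?thesis .
qed



lemma rad_facts: "0 < rad j" "rad j < 1" "rad j < rad (Suc j)"
  unfolding rad_def by auto

lemma rad_ratio: "rad (Suc j) / (rad (Suc j) - rad j) \<le> exp pi * 2 ^ j"
proof -
  define u where "u = pi / 2 ^ j"
  have u: "0 < u" "u \<le> pi" unfolding u_def by (auto simp: field_simps)
  have R: "rad (Suc j) = exp (- u)" unfolding rad_def u_def by (simp add: field_simps)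
  have r: "rad j = exp (- u) * exp (- u)" unfolding rad_def u_def by (simp add: field_simps mult_exp_exp)
  have "1 + u \<le> exp u" by (rule exp_ge_add_one_self)
  hence key: "u * exp (- u) \<le> 1 - exp (- u)"
    by (simp add: exp_minus field_simps)
  have pos: "0 < 1 - exp (- u)" using u by simp
  have "rad (Suc j) / (rad (Suc j) - rad j) = 1 / (1 - exp (- u))"
    unfolding R r using pos by (simp add: field_simps)
  also have "\<dots> \<le> 1 / (u * exp (- u))"
    using key u by (intro divide_left_mono mult_pos_pos) auto
  also have "\<dots> = exp u / u" by (simp add: exp_minus field_simps)
  also have "\<dots> \<le> exp pi / u" using u by (intro divide_right_mono) auto
  also have "\<dots> = exp pi * 2 ^ j / pi" unfolding u_def by simp
  also have "\<dots> \<le> exp pi * 2 ^ j" using pi_ge_two by (simp add: field_simps)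
  finally show ?thesis .
qed

lemma tdist_le: "tdist x y \<le> 1"
proof -
  have "\<bar>(x - y) - real_of_int (round (x - y))\<bar> \<le> 1/2"
    using of_int_round_ge[of "x - y"] of_int_round_le[of "x - y"] by linarith
  thus ?thesis unfolding tdist_def by simp
qed

lemma tdist_ge: "0 \<le> tdist x y" unfolding tdist_def by simp

lemma cont_F:
  fixes f :: "complex \<Rightarrow> 'a::complex_banach"
  assumes an: "analytic_disc f" and R: "0 < R" "R < 1" and \<delta>: "\<delta> > 0"
  shows "continuous_on {0..1} (\<lambda>t. norm (f (of_real R * zeta t)) powr \<delta>)"
proof -
  have cpath: "continuous_on {0..1} (\<lambda>t. of_real R * zeta t)"
    unfolding zeta_exp by (intro continuous_intros)
  have img: "(\<lambda>t. of_real R * zeta t) ` {0..1} \<subseteq> ball 0 1" using R by (auto simp: norm_mult)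
  have cf: "continuous_on (ball 0 1) f"
    using analytic_disc_cont[OF an] by (simp add: continuous_at_imp_continuous_on)
  have cf2: "continuous_on {0..1} (\<lambda>t. f (of_real R * zeta t))"
    using continuous_on_compose2[OF cf cpath img] .
  show ?thesis
    by (rule continuous_on_powr') (use cf2 \<delta> in \<open>auto intro: continuous_on_norm continuous_on_const\<close>)
qed

lemma nn_to_hk:
  fixes F :: "real \<Rightarrow> real"
  assumes c: "continuous_on {0..1} F" and nn: "\<And>y. 0 \<le> F y"
  shows "set_nn_integral lborel {0..1} (\<lambda>y. ennreal (F y)) = ennreal (integral {0..1} F)"
proof -
  have hi: "(F has_integral integral {0..1} F) {0..1}"
    using integrable_continuous_real[OF c] by (rule integrable_integral)
  have "integral\<^sup>N lborel (\<lambda>x. ennreal (indicator {0..1} x * F x)) = ennreal (integral {0..1} F)"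
    by (rule nn_integral_has_integral_lebesgue[OF _ hi]) (use nn in auto)
  moreover have "(\<lambda>y. ennreal (F y) * indicator {0..1} y) = (\<lambda>x. ennreal (indicator {0..1} x * F x))"
    by (auto simp: indicator_def)
  ultimately show ?thesis by simp
qed



theorem lemma17:
  fixes f :: "complex \<Rightarrow> 'a::complex_banach"
    and N :: nat and a \<delta> :: real and l :: nat and x :: real
  assumes "N \<ge> 1" and "a > 0" and "\<delta> > 0"
    and "analytic_disc f"
    and "(\<Sum>m. ennreal (2 powr (- (real (Suc m) * real N * \<delta>)) * 2 ^ (Suc m + l)) *
           set_nn_integral lborel {0..1}
             (\<lambda>y. ennreal (norm (dil f (Suc m + l) (zeta y)) powr \<delta> /
                             (1 + 2 ^ l * tdist x y) powr (a * \<delta>)))) < \<infinity>"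
  shows "(SUP k::nat. SUP y::real.
            ennreal (2 powr (- (real k * real N)) * norm (dil f (l + k) (zeta y)) /
                     (1 + 2 ^ l * tdist x y) powr a)) < \<infinity>"
proof -
  note an = assms(4) and \<delta> = assms(3) and a = assms(2)
  define T where "T m = ennreal (2 powr (- (real (Suc m) * real N * \<delta>)) * 2 ^ (Suc m + l)) *
           set_nn_integral lborel {0..1}
             (\<lambda>y. ennreal (norm (dil f (Suc m + l) (zeta y)) powr \<delta> /
                             (1 + 2 ^ l * tdist x y) powr (a * \<delta>)))" for m
  have Slt: "(\<Sum>m. T m) < \<infinity>" using assms(5) unfolding T_def .
  obtain s where s: "0 \<le> s" "(\<Sum>m. T m) = ennreal s"
    using Slt by (cases "\<Sum>m. T m") auto
  define Dc where "Dc = (1 + 2 ^ l) powr (a * \<delta>)"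
  have Dc1: "1 \<le> Dc" unfolding Dc_def using a \<delta> by (intro ge_one_powr_ge_zero) auto
  define c where "c m = 2 powr (- (real (Suc m) * real N * \<delta>)) * 2 ^ (Suc m + l)" for m :: nat
  have cpos: "0 < c m" for m unfolding c_def by simp
  define I where "I m = integral {0..1} (\<lambda>t. norm (f (of_real (rad (Suc m + l)) * zeta t)) powr \<delta>)" for m
  have contI: "continuous_on {0..1} (\<lambda>t. norm (f (of_real (rad (Suc m + l)) * zeta t)) powr \<delta>)" for m
    by (rule cont_F[OF an rad_facts(1,2) \<delta>])
  have Inn: "0 \<le> I m" for m
    unfolding I_def by (rule integral_nonneg[OF integrable_continuous_real[OF contI]]) simp
  have Ib: "c m * I m \<le> s * Dc" for m
  proof -
    define F where "F t = norm (f (of_real (rad (Suc m + l)) * zeta t)) powr \<delta>" for t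
    have Fnn: "0 \<le> F t" for t by (simp add: F_def)
    have "set_nn_integral lborel {0..1} (\<lambda>y. ennreal (F y / Dc)) \<le>
          set_nn_integral lborel {0..1}
             (\<lambda>y. ennreal (norm (dil f (Suc m + l) (zeta y)) powr \<delta> /
                             (1 + 2 ^ l * tdist x y) powr (a * \<delta>)))"
    proof (rule nn_integral_mono)
      fix y :: real
      have d1: "1 \<le> (1 + 2 ^ l * tdist x y) powr (a * \<delta>)"
        using a \<delta> tdist_ge[of x y] by (intro ge_one_powr_ge_zero) auto
      have d2: "(1 + 2 ^ l * tdist x y) powr (a * \<delta>) \<le> Dc"
        unfolding Dc_def using a \<delta> tdist_ge[of x y] tdist_le[of x y]
        by (intro powr_mono2) (auto intro: mult_left_le)
      have "F y / Dc \<le> F y / (1 + 2 ^ l * tdist x y) powr (a * \<delta>)"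
        using d1 d2 Fnn[of y] by (intro divide_left_mono mult_pos_pos) auto
      thus "ennreal (F y / Dc) * indicator {0..1} y \<le>
        ennreal (norm (dil f (Suc m + l) (zeta y)) powr \<delta> / (1 + 2 ^ l * tdist x y) powr (a * \<delta>)) * indicator {0..1} y"
        by (auto simp: F_def dil_def indicator_def intro: ennreal_leI)
    qed
    moreover have "set_nn_integral lborel {0..1} (\<lambda>y. ennreal (F y / Dc)) = ennreal (I m / Dc)"
    proof -
      have "continuous_on {0..1} (\<lambda>y. F y / Dc)"
        unfolding F_def by (rule continuous_on_divide[OF contI continuous_on_const]) (use Dc1 in auto)
      hence "set_nn_integral lborel {0..1} (\<lambda>y. ennreal (F y / Dc)) = ennreal (integral {0..1} (\<lambda>y. F y / Dc))"
        using Dc1 Fnn by (intro nn_to_hk) auto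
      also have "integral {0..1} (\<lambda>y. F y / Dc) = I m / Dc"
        unfolding I_def F_def by (simp add: integral_divide)
      finally show ?thesis .
    qed
    ultimately have "ennreal (I m / Dc) \<le> set_nn_integral lborel {0..1}
             (\<lambda>y. ennreal (norm (dil f (Suc m + l) (zeta y)) powr \<delta> /
                             (1 + 2 ^ l * tdist x y) powr (a * \<delta>)))" by simp
    hence "ennreal (c m) * ennreal (I m / Dc) \<le> T m"
      unfolding T_def c_def by (rule mult_left_mono) simp
    also have "T m \<le> (\<Sum>m. T m)"
      using sum_le_suminf[OF summableI, of "{m}" T] by simp
    finally have le1: "ennreal (c m) * ennreal (I m / Dc) \<le> ennreal s" using s by simp
    have "ennreal (c m * (I m / Dc)) = ennreal (c m) * ennreal (I m / Dc)"
      using cpos[of m] Inn[of m] Dc1 by (intro ennreal_mult) auto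
    hence "ennreal (c m * (I m / Dc)) \<le> ennreal s" using le1 by simp
    hence "c m * (I m / Dc) \<le> s" using s(1) by simp
    thus ?thesis using Dc1 by (simp add: field_simps)
  qed
  define E where "E = exp pi * s * Dc"
  have Enn: "0 \<le> E" unfolding E_def using s Dc1 by simp
  define B where "B = E powr (1 / \<delta>) * 2 powr real N"
  have bound: "2 powr (- (real k * real N)) * norm (dil f (l + k) (zeta y)) /
                     (1 + 2 ^ l * tdist x y) powr a \<le> B" for k y
  proof -
    define z where "z = of_real (rad (l + k)) * zeta y"
    define R where "R = rad (Suc (l + k))"
    have nz: "norm z = rad (l + k)" using rad_facts(1)[of "l+k"] by (simp add: z_def norm_mult)
    have R: "0 < R" "R < 1" "norm z < R" unfolding R_def using rad_facts[of "Suc (l+k)"] rad_facts[of "l+k"] nz by auto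
    have IkR: "I k = integral {0..1} (\<lambda>t. norm (f (of_real R * zeta t)) powr \<delta>)"
      unfolding I_def R_def by (simp add: add.commute)
    have "norm (f z) powr \<delta> \<le> R / (R - norm z) * I k"
      unfolding IkR by (rule vec_avg[OF an R \<delta>])
    also have "\<dots> \<le> exp pi * 2 ^ (l + k) * I k"
      using rad_ratio[of "l+k"] Inn[of k] unfolding nz R_def by (intro mult_right_mono) auto
    also have "\<dots> \<le> exp pi * 2 ^ (l + k) * (s * Dc / c k)"
      using Ib[of k] cpos[of k] by (intro mult_left_mono) (auto simp: field_simps)
    also have "\<dots> = E * (2 powr (real (Suc k) * real N * \<delta>) / 2)"
    proof -
      define P where "P = 2 powr (real (Suc k) * real N * \<delta>)"
      have Pp: "P > 0" unfolding P_def by simp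
      have cP: "c k = 2 ^ (l + k) * 2 / P"
        unfolding c_def P_def by (simp add: powr_minus_divide algebra_simps del: of_nat_Suc)
      show ?thesis unfolding cP E_def P_def[symmetric] using Pp by (simp add: field_simps)
    qed
    also have "\<dots> \<le> E * 2 powr (real (Suc k) * real N * \<delta>)"
      using Enn by (intro mult_left_mono) auto
    finally have le\<delta>: "norm (f z) powr \<delta> \<le> E * 2 powr (real (Suc k) * real N * \<delta>)" .
    have "norm (f z) = (norm (f z) powr \<delta>) powr (1 / \<delta>)"
      using \<delta> by (simp add: powr_powr)
    also have "\<dots> \<le> (E * 2 powr (real (Suc k) * real N * \<delta>)) powr (1 / \<delta>)"
      using le\<delta> \<delta> by (intro powr_mono2) auto
    also have "\<dots> = E powr (1 / \<delta>) * 2 powr (real (Suc k) * real N)"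
      using Enn \<delta> by (simp add: powr_mult powr_powr)
    finally have nf: "norm (f z) \<le> E powr (1 / \<delta>) * 2 powr (real (Suc k) * real N)" .
    have den: "1 \<le> (1 + 2 ^ l * tdist x y) powr a"
      using a tdist_ge[of x y] by (intro ge_one_powr_ge_zero) auto
    have "2 powr (- (real k * real N)) * norm (dil f (l + k) (zeta y)) / (1 + 2 ^ l * tdist x y) powr a
          \<le> 2 powr (- (real k * real N)) * norm (f z)"
    proof -
      have "0 \<le> 2 powr (- (real k * real N)) * norm (f z)" by simp
      hence "2 powr (- (real k * real N)) * norm (f z) / (1 + 2 ^ l * tdist x y) powr a \<le> 2 powr (- (real k * real N)) * norm (f z)"
      proof -
        have "2 powr (- (real k * real N)) * norm (f z) * 1 \<le> 2 powr (- (real k * real N)) * norm (f z) * (1 + 2 ^ l * tdist x y) powr a"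
          using den by (intro mult_left_mono) simp_all
        thus ?thesis using den by (simp add: divide_le_eq)
      qed
      thus ?thesis unfolding dil_def z_def .
    qed
    also have "\<dots> \<le> 2 powr (- (real k * real N)) * (E powr (1 / \<delta>) * 2 powr (real (Suc k) * real N))"
      using nf by (intro mult_left_mono) auto
    also have "\<dots> = B"
      unfolding B_def by (simp add: powr_add[symmetric] algebra_simps)
    finally show ?thesis .
  qed
  have "(SUP k::nat. SUP y::real.
            ennreal (2 powr (- (real k * real N)) * norm (dil f (l + k) (zeta y)) /
                     (1 + 2 ^ l * tdist x y) powr a)) \<le> ennreal B"
    by (intro SUP_least ennreal_leI bound)
  also have "\<dots> < \<infinity>" by simp
  finally show ?thesis .
qed


end
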